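(* Let $d$ and $k$ be positive integers and let $p$ be the smallest positive integer such that $k<\kappa_p$. If $d$ does not divide $p$, then there exists a subset $\mathcal{X}$ of $\mathbb{P}^d_\circ$ such that $\kappa(\mathcal{X})\le k$ and $|\mathcal{X}|=\lfloor\lambda(d,k)\rfloor$.
   Context: A point of $\mathbb{Z}^d$ is primitive if its coordinates are relatively prime; $\mathbb{P}^d_\circ$ denotes the set of primitive points of $\mathbb{Z}^d$ whose first non-zero coordinate is positive. For a finite $\mathcal{X}\subset\mathbb{R}^d$, $\kappa(\mathcal{X})=\max_{1\le i\le d}\sum_{x\in\mathcal{X}}|x_i|$. $B(d,p)=\{x\in\mathbb{R}^d:\|x\|_1\le p\}$; $N_p=|B(d,p)\cap\mathbb{P}^d_\circ|$ and $\kappa_p=\kappa(B(d,p)\cap\mathbb{P}^d_\circ)$ (with $N_0=\kappa_0=0$). With $p$ as in the claim, $\lambda(d,k)=N_{p-1}+\frac{d(k-\kappa_{p-1})}{p}$. *)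

theory Defs
  imports Complex_Main
begin

text \<open>Points of Z^d are represented as functions nat => int vanishing outside {..<d}.\<close>

definition zpoints :: "nat \<Rightarrow> (nat \<Rightarrow> int) set" where
  "zpoints d = {x. \<forall>i\<ge>d. x i = 0}"

definition primitive :: "nat \<Rightarrow> (nat \<Rightarrow> int) \<Rightarrow> bool" where
  "primitive d x \<longleftrightarrow> Gcd (x ` {..<d}) = 1"

definition Pcirc :: "nat \<Rightarrow> (nat \<Rightarrow> int) set" where
  "Pcirc d = {x \<in> zpoints d. primitive d x \<and>
       (\<exists>i<d. x i > 0 \<and> (\<forall>j<i. x j = 0))}"

definition kappa :: "nat \<Rightarrow> (nat \<Rightarrow> int) set \<Rightarrow> int" where
  "kappa d X = Max ((\<lambda>i. \<Sum>x\<in>X. \<bar>x i\<bar>) ` {..<d})"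

definition l1norm :: "nat \<Rightarrow> (nat \<Rightarrow> int) \<Rightarrow> int" where
  "l1norm d x = (\<Sum>i<d. \<bar>x i\<bar>)"

definition ballP :: "nat \<Rightarrow> nat \<Rightarrow> (nat \<Rightarrow> int) set" where
  "ballP d p = {x \<in> Pcirc d. l1norm d x \<le> int p}"

definition Np :: "nat \<Rightarrow> nat \<Rightarrow> nat" where
  "Np d p = card (ballP d p)"

definition kappap :: "nat \<Rightarrow> nat \<Rightarrow> int" where
  "kappap d p = kappa d (ballP d p)"

definition pmin :: "nat \<Rightarrow> nat \<Rightarrow> nat" where
  "pmin d k = (LEAST p. p > 0 \<and> int k < kappap d p)"

definition lam :: "nat \<Rightarrow> nat \<Rightarrow> real" where
  "lam d k = (let p = pmin d k in
     real (Np d (p - 1)) + real d * (real k - real_of_int (kappap d (p - 1))) / real p)"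

end

theory Submission
  imports Defs
begin



definition cnt :: "nat \<Rightarrow> nat \<Rightarrow> nat \<Rightarrow> nat \<Rightarrow> nat" where
  "cnt d s L i = (\<Sum>u<L. if (s+u) mod d = i then 1 else 0)"

lemma cnt_0[simp]: "cnt d s 0 i = 0" by (simp add: cnt_def)

lemma cnt_add: "cnt d s (L1+L2) i = cnt d s L1 i + cnt d (s+L1) L2 i"
  by (induction L2) (auto simp: cnt_def add.assoc)

lemma cnt_period: "cnt d (s + d*k) L i = cnt d s L i"
proof -
  have "(s + d*k + u) mod d = (s + u) mod d" for u
  proof -
    have "s + d*k + u = (s+u) + k*d" by simp
    then show ?thesis by (simp only: mod_mult_self1)
  qed
  then show ?thesis unfolding cnt_def by simp
qed

lemma cnt_mod: "cnt d (s mod d) L i = cnt d s L i"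
  unfolding cnt_def by (intro sum.cong refl) (simp add: mod_add_left_eq)

lemma cnt_sum: "(\<Sum>i<d. cnt d s L i) = L" if "d > 0"
proof (induction L)
  case 0 then show ?case by simp
next
  case (Suc L)
  have "(\<Sum>i<d. cnt d s (Suc L) i) = (\<Sum>i<d. cnt d s L i) + (\<Sum>i<d. if (s+L) mod d = i then 1 else 0)"
    by (simp add: cnt_def sum.distrib)
  also have "(\<Sum>i<d. if (s+L) mod d = i then 1 else (0::nat)) = 1"
    using that by (simp add: sum.delta)
  finally show ?case using Suc by simp
qed

lemma mod_pred_iff:
  fixes w i d :: nat assumes "i < d"
  shows "((w+1) mod d = i) = (w mod d = nat ((int i - 1) mod int d))"
proof -
  have "((w+1) mod d = i) = (int ((w+1) mod d) = int i)" by simp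
  also have "\<dots> = ((int w + 1) mod int d = int i)" by (simp add: zmod_int add.commute)
  also have "\<dots> = ((int w + 1) mod int d = (int i) mod int d)" using assms by simp
  also have "\<dots> = (int w mod int d = (int i - 1) mod int d)"
  proof
    assume h: "(int w + 1) mod int d = int i mod int d"
    have "(int w + 1 - 1) mod int d = (int i - 1) mod int d"
      by (rule mod_diff_cong[OF h refl])
    then show "int w mod int d = (int i - 1) mod int d" by simp
  next
    assume h: "int w mod int d = (int i - 1) mod int d"
    have "(int w + 1) mod int d = (int i - 1 + 1) mod int d"
      by (rule mod_add_cong[OF h refl])
    then show "(int w + 1) mod int d = int i mod int d" by simp
  qed
  also have "\<dots> = (w mod d = nat ((int i - 1) mod int d))"
  proof -
    have X0: "0 \<le> (int i - 1) mod int d" using assms by simp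
    have "(w mod d = nat ((int i - 1) mod int d)) = (int (w mod d) = (int i - 1) mod int d)"
      using X0 by (auto simp add: nat_eq_iff2)
    then show ?thesis by (simp add: of_nat_mod)
  qed
  finally show ?thesis .
qed

lemma cnt_shift: "i < d \<Longrightarrow> cnt d (s+1) L i = cnt d s L (nat ((int i - 1) mod int d))"
  unfolding cnt_def by (intro sum.cong refl) (metis mod_pred_iff add.commute add.left_commute)

lemma cnt_d: "i < d \<Longrightarrow> cnt d s d i = 1"
proof (induction s arbitrary: i)
  case 0
  then have "cnt d 0 d i = (\<Sum>u<d. if u = i then 1 else 0)"
    unfolding cnt_def by (intro sum.cong refl) auto
  then show ?case using 0 by (simp add: sum.delta)
next
  case (Suc s)
  have "nat ((int i - 1) mod int d) < d" using Suc.prems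
  proof -
    have "0 \<le> (int i - 1) mod int d" "(int i - 1) mod int d < int d" using Suc.prems by simp_all
    then show ?thesis by (simp add: nat_less_iff)
  qed
  then show ?case using Suc cnt_shift[of i d s d] by simp
qed

lemma cnt_mult: "i < d \<Longrightarrow> cnt d s (d*c) i = c"
proof (induction c arbitrary: s)
  case 0 then show ?case by simp
next
  case (Suc c)
  have "cnt d s (d*Suc c) i = cnt d s d i + cnt d (s+d) (d*c) i"
    using cnt_add[of d s d "d*c" i] by simp
  then show ?case using Suc cnt_d by simp
qed

lemma cnt_mono: "L1 \<le> L2 \<Longrightarrow> cnt d s L1 i \<le> cnt d s L2 i"
  using cnt_add[of d s L1 "L2-L1" i] by simp

lemma cnt_le1: "L \<le> d \<Longrightarrow> i < d \<Longrightarrow> cnt d s L i \<le> 1"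
  using cnt_mono[of L d d s i] cnt_d by simp

lemma cnt_bound: assumes "i < d" shows "cnt d s L i * d \<le> L + d - 1"
proof -
  have L: "L = d * (L div d) + L mod d" by simp
  have "cnt d s L i = L div d + cnt d (s + d*(L div d)) (L mod d) i"
  proof -
    have "cnt d s L i = cnt d s (d*(L div d) + L mod d) i" by simp
    then show ?thesis using cnt_add[of d s "d*(L div d)" "L mod d" i] cnt_mult[OF assms, of s "L div d"] by simp
  qed
  moreover have "cnt d (s + d*(L div d)) (L mod d) i \<le> (if L mod d = 0 then 0 else 1)"
    using cnt_le1[of "L mod d" d i] assms by auto
  ultimately have "cnt d s L i \<le> L div d + (if L mod d = 0 then 0 else 1)" by simp
  then have "cnt d s L i * d \<le> (L div d + (if L mod d = 0 then 0 else 1)) * d"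
    by (rule mult_le_mono1)
  also have "\<dots> = (L div d) * d + (if L mod d = 0 then 0 else d)" by (simp add: distrib_right)
  also have "\<dots> \<le> L + d - 1"
  proof (cases "L mod d = 0")
    case True then show ?thesis using div_mult_mod_eq[of L d] assms by simp
  next
    case False
    have e: "L div d * d + L mod d = L" by (rule div_mult_mod_eq)
    have "L mod d \<ge> 1" using False by simp
    then have "L div d * d + d \<le> L + d - 1" using e by arith
    then show ?thesis using False by simp
  qed
  finally show ?thesis .
qed

lemma cnt_chain: "(\<Sum>j<m. cnt d (A + j*p) p i) = cnt d A (m*p) i"
proof (induction m)
  case 0 then show ?case by simp
next
  case (Suc m)
  have "(\<Sum>j<Suc m. cnt d (A + j*p) p i) = cnt d A (m*p) i + cnt d (A + m*p) p i"
    using Suc by simp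
  also have "\<dots> = cnt d A (m*p + p) i" by (rule cnt_add[symmetric])
  finally show ?case by (simp add: add.commute)
qed


lemma cnt_pos: "u < L \<Longrightarrow> (s+u) mod d = i \<Longrightarrow> cnt d s L i \<ge> 1"
  unfolding cnt_def
  by (rule order.trans[OF _ member_le_sum[of u]]) auto

lemma cnt_zero: "(\<And>u. u < L \<Longrightarrow> (s+u) mod d \<noteq> i) \<Longrightarrow> cnt d s L i = 0"
  unfolding cnt_def by (intro sum.neutral) auto

lemma mod_2d: "d \<le> n \<Longrightarrow> n < 2*d \<Longrightarrow> n mod (d::nat) = n - d"
  by (simp add: le_mod_geq)

definition blk :: "nat \<Rightarrow> nat \<Rightarrow> nat \<Rightarrow> nat \<Rightarrow> int" where
  "blk d p s = (\<lambda>i. if i < d then int (cnt d s p i) else 0)"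

lemma blk_mod: "blk d p (s mod d) = blk d p s"
  unfolding blk_def by (simp only: cnt_mod)

lemma blk_zp: "blk d p s \<in> zpoints d"
  unfolding blk_def zpoints_def by auto

lemma blk_nonneg: "blk d p s i \<ge> 0"
  unfolding blk_def by auto

lemma blk_l1: "d > 0 \<Longrightarrow> l1norm d (blk d p s) = int p"
proof -
  assume d: "d > 0"
  have "l1norm d (blk d p s) = (\<Sum>i<d. int (cnt d s p i))"
    unfolding l1norm_def blk_def by (intro sum.cong refl) auto
  also have "\<dots> = int (\<Sum>i<d. cnt d s p i)" by simp
  also have "\<dots> = int p" using cnt_sum[OF d] by simp
  finally show ?thesis .
qed

lemma cnt_split: "i < d \<Longrightarrow> cnt d s p i = p div d + cnt d s (p mod d) i"
proof -
  assume i: "i < d"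
  have "cnt d s p i = cnt d s (d*(p div d) + p mod d) i" by simp
  also have "\<dots> = p div d + cnt d (s + d*(p div d)) (p mod d) i"
    using cnt_add[of d s "d*(p div d)" "p mod d" i] cnt_mult[OF i, of s "p div d"] by simp
  also have "cnt d (s + d*(p div d)) (p mod d) i = cnt d s (p mod d) i" by (rule cnt_period)
  finally show ?thesis .
qed

lemma Gcd_one_int: "(a::int) \<in> A \<Longrightarrow> a + 1 \<in> A \<Longrightarrow> Gcd A = 1"
proof -
  assume "a \<in> A" "a + 1 \<in> A"
  then have "Gcd A dvd a" "Gcd A dvd a + 1" by (auto intro: Gcd_dvd)
  then have "Gcd A dvd 1" by (metis add_diff_cancel_left' dvd_diff)
  then show ?thesis using Gcd_int_greater_eq_0[of A] by (simp add: zdvd1_eq)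
qed

lemma blk_prim: assumes "0 < p mod d" "d > 0" shows "primitive d (blk d p s)"
proof -
  have d: "d > 0" using assms by simp
  let ?c = "\<lambda>i. cnt d s (p mod d) i"
  have le1: "?c i \<le> 1" if "i < d" for i using cnt_le1[OF _ that] d by simp
  have sm: "(\<Sum>i<d. ?c i) = p mod d" by (rule cnt_sum[OF d])
  have "\<exists>i<d. ?c i = 1"
  proof (rule ccontr)
    assume "\<not> ?thesis"
    then have "\<forall>i<d. ?c i = 0" using le1 by (metis le_neq_implies_less less_one)
    then have "(\<Sum>i<d. ?c i) = 0" by simp
    then show False using sm assms by simp
  qed
  then obtain i1 where i1: "i1 < d" "?c i1 = 1" by blast
  have "\<exists>i<d. ?c i = 0"
  proof (rule ccontr)
    assume "\<not> ?thesis"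
    then have "\<forall>i<d. ?c i = 1" using le1 by (metis le_neq_implies_less less_one)
    then have "(\<Sum>i<d. ?c i) = d" by simp
    then show False using sm d by (metis mod_less_divisor less_irrefl)
  qed
  then obtain i0 where i0: "i0 < d" "?c i0 = 0" by blast
  have h0: "blk d p s i0 = int (p div d)" using i0 cnt_split[OF i0(1), of s p] by (simp add: blk_def)
  have h1: "blk d p s i1 = int (p div d) + 1" using i1 cnt_split[OF i1(1), of s p] by (simp add: blk_def)
  have m0: "int (p div d) \<in> blk d p s ` {..<d}"
    by (rule image_eqI[where x=i0]) (use i0 h0 in auto)
  have m1: "int (p div d) + 1 \<in> blk d p s ` {..<d}"
    by (rule image_eqI[where x=i1]) (use i1 h1 in auto)
  show ?thesis unfolding primitive_def by (rule Gcd_one_int[OF m0 m1])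
qed

definition fnp :: "nat \<Rightarrow> (nat \<Rightarrow> int) \<Rightarrow> bool" where
  "fnp d z \<longleftrightarrow> (\<exists>i<d. z i > 0 \<and> (\<forall>j<i. z j = 0))"

lemma fnp_first: fixes z :: "nat \<Rightarrow> int" assumes "\<exists>i<d. z i \<noteq> 0"
  shows "\<exists>i<d. z i \<noteq> 0 \<and> (\<forall>j<i. z j = 0)"
proof -
  define i where "i = (LEAST i. z i \<noteq> 0)"
  obtain i' where i': "i' < d" "z i' \<noteq> 0" using assms by blast
  have "z i \<noteq> 0" unfolding i_def by (rule LeastI[of _ i']) (use i' in auto)
  moreover have "i \<le> i'" unfolding i_def by (rule Least_le) (use i' in auto)
  moreover have "\<forall>j<i. z j = 0" unfolding i_def using not_less_Least by blast
  ultimately show ?thesis using i' by (intro exI[of _ i]) auto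
qed

lemma fnp_or: assumes "\<exists>i<d. z i \<noteq> 0" shows "fnp d z \<or> fnp d (- z)"
proof -
  obtain i where i: "i < d" "z i \<noteq> 0" "\<forall>j<i. z j = 0" using fnp_first[OF assms] by blast
  show ?thesis
  proof (cases "z i > 0")
    case True then show ?thesis unfolding fnp_def using i by blast
  next
    case False then have "(- z) i > 0" using i by simp
    then show ?thesis unfolding fnp_def using i by (intro disjI2 exI[of _ i]) auto
  qed
qed

lemma fnp_not_both: "fnp d z \<Longrightarrow> fnp d (- z) \<Longrightarrow> False"
proof -
  assume a: "fnp d z" "fnp d (- z)"
  then obtain i j where i: "i<d" "z i > 0" "\<forall>k<i. z k = 0"
    and j: "j < d" "(-z) j > 0" "\<forall>k<j. (-z) k = 0" unfolding fnp_def by blast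
  show False
  proof (cases i j rule: linorder_cases)
    case less then show ?thesis using i j by fastforce
  next
    case equal then show ?thesis using i j by simp
  next
    case greater then show ?thesis using i j by fastforce
  qed
qed

lemma blk_fnp: assumes "d > 0" "p > 0" shows "fnp d (blk d p s)"
proof -
  have "\<exists>i<d. blk d p s i \<noteq> 0"
  proof (rule ccontr)
    assume "\<not> ?thesis"
    then have "l1norm d (blk d p s) = 0" unfolding l1norm_def by simp
    then show False using blk_l1[OF assms(1), of p s] assms by simp
  qed
  then have "fnp d (blk d p s) \<or> fnp d (- blk d p s)" by (rule fnp_or)
  moreover have "\<not> fnp d (- blk d p s)"
    unfolding fnp_def using blk_nonneg[of d p s] by (auto simp: not_less)
  ultimately show ?thesis by blast
qed

lemma blk_Pcirc: assumes "0 < p mod d" "d > 0" shows "blk d p s \<in> Pcirc d" "l1norm d (blk d p s) = int p"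
proof -
  have d: "d > 0" "p > 0" using assms by (auto intro: Nat.gr0I)
  show "l1norm d (blk d p s) = int p" using blk_l1[OF d(1)] .
  show "blk d p s \<in> Pcirc d" unfolding Pcirc_def
    using blk_zp blk_prim[OF assms] blk_fnp[OF d] unfolding fnp_def by blast
qed

lemma blk_inj_aux:
  assumes b: "0 < p mod d" and c: "c < c'" "c' < d"
  shows "blk d p c \<noteq> blk d p c'"
proof -
  let ?b = "p mod d"
  have bd: "?b < d" using c by simp
  have key: "\<exists>i<d. cnt d c ?b i \<noteq> cnt d c' ?b i"
  proof (cases "c' < c + ?b")
    case True
    define i where "i = c' - 1"
    have "cnt d c ?b i \<ge> 1"
      by (rule cnt_pos[of "c' - 1 - c"]) (use True c in \<open>auto simp: i_def\<close>)
    moreover have "cnt d c' ?b i = 0"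
    proof (rule cnt_zero)
      fix u assume u: "u < ?b"
      show "(c' + u) mod d \<noteq> i"
      proof (cases "c' + u < d")
        case True then show ?thesis using c by (simp add: i_def)
      next
        case False
        have ud: "u < d" using u bd by linarith
        have "(c' + u) mod d = c' + u - d" using ud c False by (intro mod_2d) auto
        moreover have "c' + u - d \<noteq> i" using u bd c ud False unfolding i_def by arith
        ultimately show ?thesis by simp
      qed
    qed
    ultimately show ?thesis using c by (intro exI[of _ i]) (auto simp: i_def)
  next
    case False
    define i where "i = c + ?b - 1"
    have "cnt d c ?b i \<ge> 1"
      by (rule cnt_pos[of "?b - 1"]) (use False c b in \<open>auto simp: i_def\<close>)
    moreover have "cnt d c' ?b i = 0"
    proof (rule cnt_zero)
      fix u assume u: "u < ?b"
      show "(c' + u) mod d \<noteq> i"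
      proof (cases "c' + u < d")
        case True then show ?thesis using c False by (simp add: i_def)
      next
        case False
        have ud: "u < d" using u bd by linarith
        have "(c' + u) mod d = c' + u - d" using ud c False by (intro mod_2d) auto
        moreover have "c' + u - d \<noteq> i" using u bd c ud False unfolding i_def by arith
        ultimately show ?thesis by simp
      qed
    qed
    ultimately show ?thesis using c False by (intro exI[of _ i]) (auto simp: i_def)
  qed
  then obtain i where i: "i < d" "cnt d c ?b i \<noteq> cnt d c' ?b i" by blast
  then have "blk d p c i \<noteq> blk d p c' i"
    using cnt_split[OF i(1), of c p] cnt_split[OF i(1), of c' p] by (simp add: blk_def)
  then show ?thesis by metis
qed

lemma blk_inj: assumes "0 < p mod d" "c < d" "c' < d" "blk d p c = blk d p c'" shows "c = c'"
  using blk_inj_aux[OF assms(1)] assms by (metis linorder_neqE_nat)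


lemma neg_neg_fun[simp]: "- (- (f :: nat \<Rightarrow> int)) = f" by (simp add: fun_eq_iff)

lemma neg_inj_fun[simp]: "(- (f :: nat \<Rightarrow> int) = - g) = (f = g)" by (auto simp: fun_eq_iff)

definition rotn :: "nat \<Rightarrow> nat \<Rightarrow> (nat \<Rightarrow> int) \<Rightarrow> (nat \<Rightarrow> int)" where
  "rotn d n x = (\<lambda>i. if i < d then x (nat ((int i - int n) mod int d)) else 0)"

definition nrm :: "nat \<Rightarrow> (nat \<Rightarrow> int) \<Rightarrow> (nat \<Rightarrow> int)" where
  "nrm d z = (if fnp d z then z else - z)"

definition ff :: "nat \<Rightarrow> (nat \<Rightarrow> int) \<Rightarrow> (nat \<Rightarrow> int)" where
  "ff d x = nrm d (rotn d 1 x)"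

definition TT :: "nat \<Rightarrow> nat \<Rightarrow> (nat \<Rightarrow> int) set" where
  "TT d p = {x \<in> Pcirc d. l1norm d x = int p}"

lemma idx_lt: "i < d \<Longrightarrow> nat ((int i - int n) mod int d) < d"
proof -
  assume i: "i < d"
  have "0 \<le> (int i - int n) mod int d" "(int i - int n) mod int d < int d" using i by simp_all
  then show ?thesis by (simp add: nat_less_iff)
qed

lemma rotn_rotn: "rotn d m (rotn d n x) = rotn d (m+n) x"
proof (rule ext)
  fix i
  show "rotn d m (rotn d n x) i = rotn d (m+n) x i"
  proof (cases "i < d")
    case True
    let ?j = "nat ((int i - int m) mod int d)"
    have j: "?j < d" using idx_lt[OF True] .
    have ij: "int ?j = (int i - int m) mod int d" using True by simp
    have "(int ?j - int n) mod int d = (int i - int (m+n)) mod int d"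
      unfolding ij by (simp add: mod_diff_left_eq algebra_simps)
    then show ?thesis using True j unfolding rotn_def by simp
  qed (simp add: rotn_def)
qed

lemma rotn_0: "x \<in> zpoints d \<Longrightarrow> rotn d 0 x = x"
  unfolding rotn_def zpoints_def by (auto simp: fun_eq_iff)

lemma rotn_d: "x \<in> zpoints d \<Longrightarrow> rotn d d x = x"
proof -
  assume x: "x \<in> zpoints d"
  have "(int i - int d) mod int d = int i" if "i < d" for i
    using that by (simp add: mod_diff_right_eq[symmetric])
  then show ?thesis using x unfolding rotn_def zpoints_def by (auto simp: fun_eq_iff)
qed

lemma rotn_neg: "rotn d n (- x) = - rotn d n x"
  unfolding rotn_def by (auto simp: fun_eq_iff)

lemma rotn_zp: "rotn d n x \<in> zpoints d"
  unfolding rotn_def zpoints_def by auto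

lemma idx_perm: "(\<lambda>i. nat ((int i - int n) mod int d)) ` {..<d} = {..<d}"
proof (rule endo_inj_surj)
  show "(\<lambda>i. nat ((int i - int n) mod int d)) ` {..<d} \<subseteq> {..<d}" using idx_lt by auto
  show "inj_on (\<lambda>i. nat ((int i - int n) mod int d)) {..<d}"
  proof (rule inj_onI)
    fix i i' assume i: "i \<in> {..<d}" "i' \<in> {..<d}"
      and e: "nat ((int i - int n) mod int d) = nat ((int i' - int n) mod int d)"
    have "(int i - int n) mod int d = (int i' - int n) mod int d"
      using e i by (simp add: nat_eq_iff2)
    then have "(int i - int n + int n) mod int d = (int i' - int n + int n) mod int d"
      by (rule mod_add_cong) simp
    then have "int i mod int d = int i' mod int d" by simp
    then show "i = i'" using i by simp
  qed
qed simp

lemma rotn_image: "(rotn d n x) ` {..<d} = x ` {..<d}"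
proof -
  have "(rotn d n x) ` {..<d} = x ` (\<lambda>i. nat ((int i - int n) mod int d)) ` {..<d}"
    unfolding rotn_def by (auto simp: image_iff)
  then show ?thesis using idx_perm by simp
qed

lemma idx_inj: "inj_on (\<lambda>i. nat ((int i - int n) mod int d)) {..<d}"
  by (rule eq_card_imp_inj_on) (auto simp: idx_perm)

lemma sum_rotn: "(\<Sum>i<d. g (x (nat ((int i - int n) mod int d)))) = (\<Sum>i<d. (g (x i)::int))"
proof -
  have "(\<Sum>i<d. g (x i)) = (\<Sum>i\<in>(\<lambda>i. nat ((int i - int n) mod int d)) ` {..<d}. g (x i))"
    using idx_perm by simp
  also have "\<dots> = (\<Sum>i<d. g (x (nat ((int i - int n) mod int d))))"
    by (rule sum.reindex[OF idx_inj, unfolded comp_def])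
  finally show ?thesis by simp
qed

lemma l1_rotn: "l1norm d (rotn d n x) = l1norm d x"
proof -
  have "l1norm d (rotn d n x) = (\<Sum>i<d. \<bar>x (nat ((int i - int n) mod int d))\<bar>)"
    unfolding l1norm_def rotn_def by (intro sum.cong refl) auto
  also have "\<dots> = l1norm d x" unfolding l1norm_def by (rule sum_rotn)
  finally show ?thesis .
qed

lemma prim_rotn: "primitive d (rotn d n x) = primitive d x"
  unfolding primitive_def rotn_image ..

lemma Gcd_uminus_int: "Gcd (uminus ` (A::int set)) = Gcd A"
proof (rule zdvd_antisym_nonneg)
  show "Gcd (uminus ` A) dvd Gcd A"
    by (rule Gcd_greatest) (metis Gcd_dvd dvd_minus_iff image_eqI)
  show "Gcd A dvd Gcd (uminus ` A)"
    by (rule Gcd_greatest) (auto intro: Gcd_dvd)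
qed simp_all

lemma prim_neg: "primitive d (- x) = primitive d x"
proof -
  have "(- x) ` {..<d} = uminus ` (x ` {..<d})" by (auto simp: image_iff)
  then show ?thesis unfolding primitive_def by (simp add: Gcd_uminus_int)
qed

lemma l1_neg: "l1norm d (- x) = l1norm d x"
  unfolding l1norm_def by simp

lemma zp_neg: "x \<in> zpoints d \<Longrightarrow> - x \<in> zpoints d"
  unfolding zpoints_def by simp

lemma l1_pos_nz: "l1norm d z > 0 \<Longrightarrow> \<exists>i<d. z i \<noteq> 0"
proof (rule ccontr)
  assume "l1norm d z > 0" "\<not> (\<exists>i<d. z i \<noteq> 0)"
  then show False unfolding l1norm_def by simp
qed

lemma nrm_cases: "nrm d z = z \<or> nrm d z = - z"
  unfolding nrm_def by auto

lemma nrm_fnp: "\<exists>i<d. z i \<noteq> 0 \<Longrightarrow> fnp d (nrm d z)"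
  unfolding nrm_def using fnp_or by auto

lemma nrm_neg: "\<exists>i<d. z i \<noteq> 0 \<Longrightarrow> nrm d (- z) = nrm d z"
  unfolding nrm_def using fnp_or[of d z] fnp_not_both[of d z] by auto

lemma Pcirc_fnp: "x \<in> Pcirc d \<Longrightarrow> fnp d x"
  unfolding Pcirc_def fnp_def by auto

lemma nrm_id: "fnp d x \<Longrightarrow> nrm d x = x"
  unfolding nrm_def by simp

lemma nrm_in: assumes "z \<in> zpoints d" "primitive d z" "l1norm d z = int p" "p > 0"
  shows "nrm d z \<in> TT d p"
proof -
  have nz: "\<exists>i<d. z i \<noteq> 0" using assms by (intro l1_pos_nz) simp
  have "nrm d z \<in> zpoints d \<and> primitive d (nrm d z) \<and> l1norm d (nrm d z) = int p"
    using nrm_cases[of d z] assms zp_neg prim_neg l1_neg by (elim disjE) auto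
  then show ?thesis using nrm_fnp[OF nz] unfolding TT_def Pcirc_def fnp_def by blast
qed

lemma TT_props: "x \<in> TT d p \<Longrightarrow> x \<in> zpoints d \<and> primitive d x \<and> l1norm d x = int p \<and> fnp d x"
  unfolding TT_def Pcirc_def fnp_def by blast

lemma ff_TT: assumes "x \<in> TT d p" "p > 0" shows "ff d x \<in> TT d p"
  unfolding ff_def using TT_props[OF assms(1)] assms(2)
  by (intro nrm_in) (auto simp: rotn_zp prim_rotn l1_rotn)

lemma ff_pow: assumes "x \<in> TT d p" "p > 0" shows "(ff d ^^ n) x = nrm d (rotn d n x)"
proof (induction n)
  case 0 then show ?case using TT_props[OF assms(1)] by (simp add: rotn_0 nrm_id)
next
  case (Suc n)
  have nz: "\<exists>i<d. rotn d (Suc n) x i \<noteq> 0"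
    using TT_props[OF assms(1)] assms(2) by (intro l1_pos_nz) (simp add: l1_rotn)
  have "(ff d ^^ Suc n) x = ff d ((ff d ^^ n) x)" by simp
  also have "\<dots> = ff d (nrm d (rotn d n x))" using Suc by simp
  also have "\<dots> = nrm d (rotn d 1 (nrm d (rotn d n x)))" by (simp add: ff_def)
  also have "\<dots> = nrm d (rotn d (Suc n) x)"
  proof (cases "nrm d (rotn d n x) = rotn d n x")
    case True then show ?thesis by (simp add: rotn_rotn)
  next
    case False
    then have "nrm d (rotn d n x) = - rotn d n x" using nrm_cases by blast
    then have "rotn d 1 (nrm d (rotn d n x)) = - rotn d (Suc n) x" by (simp add: rotn_neg rotn_rotn)
    then show ?thesis using nrm_neg[OF nz] by simp
  qed
  finally show ?case .
qed

lemma ff_pow_d: assumes "x \<in> TT d p" "p > 0" shows "(ff d ^^ d) x = x"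
  using ff_pow[OF assms, of d] TT_props[OF assms(1)] by (simp add: rotn_d nrm_id)

lemma ff_inj: assumes "p > 0" "d > 0" shows "inj_on (ff d) (TT d p)"
proof (rule inj_onI)
  fix x y assume x: "x \<in> TT d p" and y: "y \<in> TT d p" and e: "ff d x = ff d y"
  have "rotn d 1 x = rotn d 1 y \<or> rotn d 1 x = - rotn d 1 y"
  proof -
    have e2: "nrm d (rotn d 1 x) = nrm d (rotn d 1 y)" using e unfolding ff_def .
    show ?thesis
    proof (cases "nrm d (rotn d 1 x) = rotn d 1 x")
      case True
      show ?thesis
      proof (cases "nrm d (rotn d 1 y) = rotn d 1 y")
        case True2: True
        then show ?thesis using True e2 by simp
      next
        case False
        then have "nrm d (rotn d 1 y) = - rotn d 1 y" using nrm_cases by blast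
        then show ?thesis using True e2 by simp
      qed
    next
      case False
      then have n1: "nrm d (rotn d 1 x) = - rotn d 1 x" using nrm_cases by blast
      show ?thesis
      proof (cases "nrm d (rotn d 1 y) = rotn d 1 y")
        case True
        then have "- rotn d 1 x = rotn d 1 y" using n1 e2 by simp
        then have "- (- rotn d 1 x) = - rotn d 1 y" by (rule arg_cong)
        then have "rotn d 1 x = - rotn d 1 y" by simp
        then show ?thesis by simp
      next
        case False
        then have "nrm d (rotn d 1 y) = - rotn d 1 y" using nrm_cases by blast
        then show ?thesis using n1 e2 by simp
      qed
    qed
  qed
  then have "rotn d (d-1) (rotn d 1 x) = rotn d (d-1) (rotn d 1 y) \<or>
             rotn d (d-1) (rotn d 1 x) = - rotn d (d-1) (rotn d 1 y)"
    by (auto simp: rotn_neg)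
  moreover have "rotn d (d-1) (rotn d 1 z) = rotn d d z" for z
    using assms by (simp add: rotn_rotn)
  ultimately have "x = y \<or> x = - y"
    using TT_props[OF x] TT_props[OF y] by (simp add: rotn_d)
  then show "x = y" using TT_props[OF x] TT_props[OF y] fnp_not_both by blast
qed

lemma ff_abs: "i < d \<Longrightarrow> \<bar>ff d x i\<bar> = \<bar>x (nat ((int i - 1) mod int d))\<bar>"
proof -
  assume i: "i < d"
  have "\<bar>nrm d (rotn d 1 x) i\<bar> = \<bar>rotn d 1 x i\<bar>"
    using nrm_cases[of d "rotn d 1 x"] by (elim disjE) simp_all
  then show ?thesis using i unfolding ff_def by (simp add: rotn_def)
qed


definition load :: "(nat \<Rightarrow> int) set \<Rightarrow> nat \<Rightarrow> int" where
  "load X i = (\<Sum>x\<in>X. \<bar>x i\<bar>)"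

lemma abs_le_l1: "i < d \<Longrightarrow> \<bar>x i\<bar> \<le> l1norm d x"
  unfolding l1norm_def by (rule member_le_sum) auto

lemma finite_l1: "finite {x \<in> zpoints d. l1norm d x \<le> int p}"
proof (rule finite_subset)
  show "{x \<in> zpoints d. l1norm d x \<le> int p} \<subseteq>
    {f. \<forall>i. (i \<in> {..<d} \<longrightarrow> f i \<in> {-int p..int p}) \<and> (i \<notin> {..<d} \<longrightarrow> f i = 0)}"
  proof
    fix x assume "x \<in> {x \<in> zpoints d. l1norm d x \<le> int p}"
    then have x: "x \<in> zpoints d" "l1norm d x \<le> int p" by auto
    have "\<forall>i. (i \<in> {..<d} \<longrightarrow> x i \<in> {-int p..int p}) \<and> (i \<notin> {..<d} \<longrightarrow> x i = 0)"
    proof (intro allI conjI impI)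
      fix i assume "i \<in> {..<d}"
      then have "\<bar>x i\<bar> \<le> int p" using abs_le_l1[of i d x] x by simp
      then show "x i \<in> {-int p..int p}" by auto
    next
      fix i assume "i \<notin> {..<d}" then show "x i = 0" using x unfolding zpoints_def by simp
    qed
    then show "x \<in> {f. \<forall>i. (i \<in> {..<d} \<longrightarrow> f i \<in> {-int p..int p}) \<and> (i \<notin> {..<d} \<longrightarrow> f i = 0)}"
      by simp
  qed
  show "finite {f. \<forall>i. (i \<in> {..<d} \<longrightarrow> f i \<in> {-int p..int p}) \<and> (i \<notin> {..<d} \<longrightarrow> f i = (0::int))}"
    by (rule finite_set_of_finite_funs) auto
qed

lemma finite_ballP: "finite (ballP d p)"
  by (rule finite_subset[OF _ finite_l1[of d p]]) (auto simp: ballP_def Pcirc_def)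

lemma finite_TT: "finite (TT d p)"
  by (rule finite_subset[OF _ finite_l1[of d p]]) (auto simp: TT_def Pcirc_def)

lemma uniform_load:
  assumes d: "d > 0" and p: "p > 0" and Z: "Z \<subseteq> TT d p" "ff d ` Z \<subseteq> Z"
  shows "i < d \<Longrightarrow> int d * load Z i = int p * int (card Z)"
proof -
  have fin: "finite Z" using Z finite_TT finite_subset by blast
  have inj: "inj_on (ff d) Z" using ff_inj[OF p d] Z inj_on_subset by blast
  have ffZ: "ff d ` Z = Z" using endo_inj_surj[OF fin Z(2) inj] .
  have step: "load Z i = load Z (nat ((int i - 1) mod int d))" if i: "i < d" for i
  proof -
    have "load Z i = (\<Sum>y\<in>ff d ` Z. \<bar>y i\<bar>)" unfolding load_def ffZ ..
    also have "\<dots> = (\<Sum>y\<in>Z. \<bar>ff d y i\<bar>)" by (rule sum.reindex[OF inj, unfolded comp_def])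
    also have "\<dots> = load Z (nat ((int i - 1) mod int d))"
      unfolding load_def using ff_abs[OF i] by simp
    finally show ?thesis .
  qed
  have all: "i < d \<Longrightarrow> load Z i = load Z 0" for i
  proof (induction i)
    case 0 then show ?case by simp
  next
    case (Suc i)
    have "load Z (Suc i) = load Z (nat ((int (Suc i) - 1) mod int d))" using step[OF Suc.prems] .
    also have "nat ((int (Suc i) - 1) mod int d) = i" using Suc.prems by simp
    finally show ?case using Suc by simp
  qed
  have "(\<Sum>i<d. load Z i) = (\<Sum>y\<in>Z. l1norm d y)"
    unfolding load_def l1norm_def by (rule sum.swap)
  also have "\<dots> = (\<Sum>y\<in>Z. int p)" using Z(1) by (intro sum.cong refl) (auto simp: TT_def)
  also have "\<dots> = int p * int (card Z)" by simp
  finally have s: "(\<Sum>i<d. load Z i) = int p * int (card Z)" .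
  have "(\<Sum>i<d. load Z i) = (\<Sum>i<d. load Z 0)" by (rule sum.cong[OF refl all]) simp
  then have "int d * load Z 0 = int p * int (card Z)" using s by simp
  then show "i < d \<Longrightarrow> int d * load Z i = int p * int (card Z)" using all[of i] by simp
qed

definition orb :: "nat \<Rightarrow> (nat \<Rightarrow> int) \<Rightarrow> (nat \<Rightarrow> int) set" where
  "orb d x = (\<lambda>n. (ff d ^^ n) x) ` {..<d}"

lemma orb_sub: assumes "x \<in> V" "ff d ` V \<subseteq> V" shows "orb d x \<subseteq> V"
proof -
  have "(ff d ^^ n) x \<in> V" for n
  proof (induction n)
    case 0 then show ?case using assms(1) by simp
  next
    case (Suc n)
    have "(ff d ^^ Suc n) x = ff d ((ff d ^^ n) x)" by simp
    also have "\<dots> \<in> ff d ` V" using Suc by (rule imageI)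
    finally show ?case using assms(2) by blast
  qed
  then show ?thesis unfolding orb_def by blast
qed

lemma orb_inv: assumes "x \<in> TT d p" "p > 0" shows "ff d ` orb d x \<subseteq> orb d x"
proof
  fix y assume "y \<in> ff d ` orb d x"
  then obtain n where n: "n < d" "y = ff d ((ff d ^^ n) x)" unfolding orb_def by auto
  then have y: "y = (ff d ^^ Suc n) x" by simp
  show "y \<in> orb d x"
  proof (cases "Suc n < d")
    case True then show ?thesis using y unfolding orb_def by (intro image_eqI[of _ _ "Suc n"]) simp_all
  next
    case False
    then have "Suc n = d" using n by simp
    then have "y = (ff d ^^ 0) x" using y ff_pow_d[OF assms] by simp
    then show ?thesis using n unfolding orb_def by (intro image_eqI[of _ _ 0]) simp_all
  qed
qed

lemma orb_card: "card (orb d x) \<le> d"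
  unfolding orb_def using card_image_le[of "{..<d}" "\<lambda>n. (ff d ^^ n) x"] by simp

lemma orb_mem: "d > 0 \<Longrightarrow> x \<in> orb d x"
  unfolding orb_def by (rule image_eqI[of _ _ 0]) simp_all

lemma greedy:
  assumes d: "d > 0" and p: "p > 0" and r: "r \<ge> 0"
  shows "finite V \<Longrightarrow> V \<subseteq> TT d p \<Longrightarrow> ff d ` V \<subseteq> V \<Longrightarrow>
    \<exists>G \<subseteq> V. ff d ` G \<subseteq> G \<and> int p * int (card G) \<le> int d * r \<and>
       (G = V \<or> int d * r < int p * int (card G) + int d * int p)"
proof (induction "card V" arbitrary: V rule: less_induct)
  case less
  show ?case
  proof (cases "V = {}")
    case True
    then show ?thesis using r by (intro exI[of _ "{}"]) simp
  next
    case False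
    then obtain x where x: "x \<in> V" by blast
    let ?O = "orb d x"
    have OV: "?O \<subseteq> V" by (rule orb_sub[OF x less.prems(3)])
    have Oinv: "ff d ` ?O \<subseteq> ?O" using orb_inv[OF _ p] x less.prems(2) by blast
    have finO: "finite ?O" unfolding orb_def by simp
    have injT: "inj_on (ff d) (TT d p)" by (rule ff_inj[OF p d])
    have OO: "ff d ` ?O = ?O"
      by (rule endo_inj_surj[OF finO Oinv]) (use injT OV less.prems(2) in \<open>blast intro: inj_on_subset\<close>)
    let ?V' = "V - ?O"
    have V'inv: "ff d ` ?V' \<subseteq> ?V'"
    proof
      fix z assume "z \<in> ff d ` ?V'"
      then obtain y where y: "y \<in> V" "y \<notin> ?O" "z = ff d y" by blast
      have "z \<in> V" using y less.prems(3) by blast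
      moreover have "z \<notin> ?O"
      proof
        assume "z \<in> ?O"
        then obtain w where w: "w \<in> ?O" "z = ff d w" using OO by (metis imageE)
        have yT: "y \<in> TT d p" using y less.prems(2) by blast
        have wT: "w \<in> TT d p" using w OV less.prems(2) by blast
        have "y = w" by (rule inj_onD[OF injT _ yT wT]) (use y w in simp)
        then show False using y w by simp
      qed
      ultimately show "z \<in> ?V'" by simp
    qed
    have lt: "card ?V' < card V"
      using x orb_mem[OF d, of x] less.prems(1) by (intro psubset_card_mono) auto
    have fin': "finite ?V'" using less.prems(1) by simp
    have sub': "?V' \<subseteq> TT d p" using less.prems(2) by blast
    obtain G where GG: "G \<subseteq> ?V' \<and> ff d ` G \<subseteq> G \<and> int p * int (card G) \<le> int d * r \<and>
      (G = ?V' \<or> int d * r < int p * int (card G) + int d * int p)"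
      using less.hyps[OF lt fin' sub' V'inv] by (elim exE)
    note G = GG[THEN conjunct1] GG[THEN conjunct2, THEN conjunct1]
      GG[THEN conjunct2, THEN conjunct2, THEN conjunct1] GG[THEN conjunct2, THEN conjunct2, THEN conjunct2]
    have cV: "card V = card ?V' + card ?O"
    proof -
      have "card ?V' = card V - card ?O" by (rule card_Diff_subset[OF finO OV])
      moreover have "card ?O \<le> card V" by (rule card_mono[OF less.prems(1) OV])
      ultimately show ?thesis by simp
    qed
    show ?thesis
    proof (cases "G = ?V'")
      case True
      show ?thesis
      proof (cases "int p * int (card V) \<le> int d * r")
        case True2: True
        show ?thesis by (rule exI[of _ V]) (use True2 less.prems(3) in simp)
      next
        case False
        have "int p * int (card ?O) \<le> int p * int d" using orb_card[of d x] by (intro mult_left_mono) auto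
        moreover have "int p * int (card V) = int p * int (card G) + int p * int (card ?O)"
          using cV True by (simp add: distrib_left)
        ultimately have "int d * r < int p * int (card G) + int d * int p"
          using False by (simp add: mult.commute)
        have "G \<subseteq> V" using G(1) by blast
        then show ?thesis using G(2,3) \<open>int d * r < _\<close> by (intro exI[of _ G] conjI disjI2)
      qed
    next
      case False
      then have h: "int d * r < int p * int (card G) + int d * int p" using G(4) by simp
      have "G \<subseteq> V" using G(1) by blast
      then show ?thesis using G(2,3) h by (intro exI[of _ G] conjI disjI2)
    qed
  qed
qed


definition sq :: "nat \<Rightarrow> nat \<Rightarrow> nat \<Rightarrow> nat" where
  "sq d p n = n*p + n div (d div gcd p d)"

lemma sum_split_nat: "(\<Sum>n<a+b. f n) = (\<Sum>n<a. f n) + (\<Sum>j<b. f (a+j)) " for f :: "nat \<Rightarrow> nat"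
  by (induction b) auto

lemma gcd_facts:
  fixes p d :: nat
  assumes d: "d > 0"
  shows "gcd p d * (d div gcd p d) = d" "gcd p d * (p div gcd p d) = p"
    "(p div gcd p d) * d = (d div gcd p d) * p" "d div gcd p d > 0" "gcd p d > 0"
proof -
  let ?g = "gcd p d"
  show a: "?g * (d div ?g) = d" by (metis dvd_mult_div_cancel gcd_dvd2)
  show b: "?g * (p div ?g) = p" by (metis dvd_mult_div_cancel gcd_dvd1)
  show "(p div ?g) * d = (d div ?g) * p"
  proof -
    have "(p div ?g) * d = (p div ?g) * (?g * (d div ?g))" using a by simp
    also have "\<dots> = (?g * (p div ?g)) * (d div ?g)" by (simp only: mult.assoc mult.commute mult.left_commute)
    also have "\<dots> = (d div ?g) * p" using b by simp
    finally show ?thesis .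
  qed
  show "?g > 0" using d by simp
  show "d div ?g > 0" using d a by (metis gr0I mult_0_right)
qed

lemma block_sum:
  assumes d: "d > 0" and i: "i < d"
  shows "(\<Sum>j<(d div gcd p d). cnt d (sq d p (q * (d div gcd p d) + j)) p i) = p div gcd p d"
proof -
  let ?e = "d div gcd p d"
  have e: "?e > 0" using gcd_facts[OF d] by simp
  have "(\<Sum>j<?e. cnt d (sq d p (q * ?e + j)) p i) = (\<Sum>j<?e. cnt d ((q + q*?e*p) + j*p) p i)"
  proof (rule sum.cong[OF refl])
    fix j assume "j \<in> {..<?e}"
    then have "(q * ?e + j) div ?e = q" using e by simp
    then have "sq d p (q * ?e + j) = (q + q*?e*p) + j*p" unfolding sq_def by (simp add: algebra_simps)
    then show "cnt d (sq d p (q * ?e + j)) p i = cnt d ((q + q*?e*p) + j*p) p i" by simp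
  qed
  also have "\<dots> = cnt d (q + q*?e*p) (?e*p) i" by (rule cnt_chain)
  also have "?e * p = d * (p div gcd p d)" using gcd_facts(3)[OF d] by (simp add: mult.commute)
  also have "cnt d (q + q*?e*p) (d * (p div gcd p d)) i = p div gcd p d" by (rule cnt_mult[OF i])
  finally show ?thesis .
qed

lemma prefix_load:
  assumes d: "d > 0" and i: "i < d"
  shows "(\<Sum>n<t. cnt d (sq d p n) p i) * d \<le> t*p + d - 1"
proof -
  let ?e = "d div gcd p d"
  let ?f = "\<lambda>n. cnt d (sq d p n) p i"
  have e: "?e > 0" using gcd_facts[OF d] by simp
  define Q where "Q = t div ?e"
  define j where "j = t mod ?e"
  have t: "t = Q * ?e + j" unfolding Q_def j_def by (rule div_mult_mod_eq[symmetric])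
  have part1: "(\<Sum>n<Q * ?e. ?f n) = Q * (p div gcd p d)"
  proof (induction Q)
    case 0 then show ?case by simp
  next
    case (Suc Q)
    have "(\<Sum>n<Suc Q * ?e. ?f n) = (\<Sum>n<Q * ?e + ?e. ?f n)" by (simp add: add.commute)
    also have "\<dots> = (\<Sum>n<Q * ?e. ?f n) + (\<Sum>j<?e. ?f (Q * ?e + j))" by (rule sum_split_nat)
    also have "(\<Sum>j<?e. ?f (Q * ?e + j)) = p div gcd p d" by (rule block_sum[OF d i])
    finally show ?case using Suc by simp
  qed
  have part2: "(\<Sum>j'<j. ?f (Q * ?e + j')) = cnt d (Q + Q*?e*p) (j*p) i"
  proof -
    have "(\<Sum>j'<j. ?f (Q * ?e + j')) = (\<Sum>j'<j. cnt d ((Q + Q*?e*p) + j'*p) p i)"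
    proof (rule sum.cong[OF refl])
      fix j' assume "j' \<in> {..<j}"
      then have "j' < ?e" unfolding j_def using e by (meson lessThan_iff mod_less_divisor order.strict_trans)
      then have "(Q * ?e + j') div ?e = Q" using e by simp
      then have "sq d p (Q * ?e + j') = (Q + Q*?e*p) + j'*p" unfolding sq_def by (simp add: algebra_simps)
      then show "?f (Q * ?e + j') = cnt d ((Q + Q*?e*p) + j'*p) p i" by simp
    qed
    also have "\<dots> = cnt d (Q + Q*?e*p) (j*p) i" by (rule cnt_chain)
    finally show ?thesis .
  qed
  have "(\<Sum>n<t. ?f n) = Q * (p div gcd p d) + cnt d (Q + Q*?e*p) (j*p) i"
    unfolding t sum_split_nat part1 part2 ..
  then have "(\<Sum>n<t. ?f n) * d = Q * ((p div gcd p d) * d) + cnt d (Q + Q*?e*p) (j*p) i * d"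
    by (simp add: algebra_simps)
  also have "\<dots> = Q * ?e * p + cnt d (Q + Q*?e*p) (j*p) i * d"
    using gcd_facts(3)[OF d] by simp
  also have "\<dots> \<le> Q * ?e * p + (j*p + d - 1)"
    using cnt_bound[OF i] by simp
  also have "\<dots> = t*p + d - 1" unfolding t using d by (simp add: algebra_simps)
  finally show ?thesis .
qed

lemma int_small_dvd: "(g::int) dvd a - b \<Longrightarrow> 0 \<le> a \<Longrightarrow> a < g \<Longrightarrow> 0 \<le> b \<Longrightarrow> b < g \<Longrightarrow> a = b"
proof (rule ccontr)
  assume h: "g dvd a - b" "0 \<le> a" "a < g" "0 \<le> b" "b < g" "a \<noteq> b"
  show False
  proof (cases "a > b")
    case True
    then show False using h zdvd_not_zless[of "a - b" g] by simp
  next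
    case False
    then have "g dvd b - a" using h by (metis dvd_minus_iff minus_diff_eq)
    then show False using h False zdvd_not_zless[of "b - a" g] by simp
  qed
qed

lemma prefix_inj:
  assumes d: "d > 0" and n: "n < d" and m: "m < d" and eq: "sq d p n mod d = sq d p m mod d"
  shows "n = m"
proof -
  let ?g = "gcd p d" let ?e = "d div ?g" let ?p' = "p div ?g"
  note gf = gcd_facts[OF d, of p]
  have nq: "n div ?e < ?g" using n gf by (metis div_less_iff_less_mult mult.commute)
  have mq: "m div ?e < ?g" using m gf by (metis div_less_iff_less_mult mult.commute)
  have dv: "int d dvd int (sq d p n) - int (sq d p m)"
    using eq by (metis mod_eq_dvd_iff of_nat_mod of_nat_eq_iff zmod_int)
  have gd: "int ?g dvd int d" by simp
  have gp: "int ?g dvd int p" by simp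
  have "int (sq d p n) - int (sq d p m) = (int n - int m) * int p + (int (n div ?e) - int (m div ?e))"
    unfolding sq_def by (simp add: algebra_simps)
  then have "int ?g dvd (int n - int m) * int p + (int (n div ?e) - int (m div ?e))"
    using dvd_trans[OF gd dv] by simp
  then have "int ?g dvd int (n div ?e) - int (m div ?e)"
    using gp by (metis dvd_add_right_iff dvd_mult)
  then have qq: "n div ?e = m div ?e"
    using int_small_dvd[of "int ?g"] nq mq by force
  have "int (sq d p n) - int (sq d p m) = (int n - int m) * int p"
    unfolding sq_def using qq by (simp add: algebra_simps)
  then have "int d dvd (int n - int m) * int p" using dv by simp
  then have "int ?g * int ?e dvd (int ?g * int ?p') * (int n - int m)"
    using gf by (metis mult.commute of_nat_mult)
  then have "int ?e dvd int ?p' * (int n - int m)"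
    using gf d by (simp add: mult.assoc)
  moreover have "coprime (int ?e) (int ?p')"
    using div_gcd_coprime[of d p] d by (simp add: gcd.commute coprime_commute)
  ultimately have "int ?e dvd int n - int m"
    using coprime_dvd_mult_right_iff by blast
  then have "int n mod int ?e = int m mod int ?e" by (simp add: mod_eq_dvd_iff)
  then have "n mod ?e = m mod ?e" by (metis of_nat_eq_iff zmod_int)
  then show "n = m" using qq by (metis div_mult_mod_eq)
qed


lemma load_le_kappa: "finite ({..<d}::nat set) \<Longrightarrow> i < d \<Longrightarrow> load X i \<le> kappa d X"
  unfolding kappa_def load_def by (rule Max_ge) auto

lemma kappa_le: assumes "d > 0" "\<And>i. i < d \<Longrightarrow> load X i \<le> K" shows "kappa d X \<le> K"
  unfolding kappa_def using assms unfolding load_def by (intro Max.boundedI) auto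

lemma kappa_ex: assumes "d > 0" shows "\<exists>i<d. kappa d X = load X i"
proof -
  have "kappa d X \<in> (\<lambda>i. \<Sum>x\<in>X. \<bar>x i\<bar>) ` {..<d}"
    unfolding kappa_def using assms by (intro Max_in) auto
  then show ?thesis unfolding load_def by auto
qed

lemma Pcirc_l1_pos: "x \<in> Pcirc d \<Longrightarrow> l1norm d x \<ge> 1"
proof -
  assume "x \<in> Pcirc d"
  then obtain i where i: "i < d" "x i > 0" unfolding Pcirc_def by blast
  then have "\<bar>x i\<bar> \<le> l1norm d x" using abs_le_l1[of i d x] by simp
  then show ?thesis using i by simp
qed

lemma kappa0: assumes "d > 0" shows "kappap d 0 = 0"
proof -
  have "ballP d 0 = {}" unfolding ballP_def using Pcirc_l1_pos by force
  then have "kappa d (ballP d 0) \<le> 0" using assms by (intro kappa_le) (auto simp: load_def)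
  moreover have "kappa d (ballP d 0) \<ge> 0"
    using kappa_ex[OF assms, of "ballP d 0"] by (auto simp: load_def intro: sum_nonneg)
  ultimately show ?thesis unfolding kappap_def by simp
qed

lemma ballP_split: assumes "p > 0"
  shows "ballP d p = ballP d (p-1) \<union> TT d p" "ballP d (p-1) \<inter> TT d p = {}"
proof -
  have "int (p - 1) = int p - 1" using assms by simp
  then show "ballP d p = ballP d (p-1) \<union> TT d p" "ballP d (p-1) \<inter> TT d p = {}"
    unfolding ballP_def TT_def by auto
qed

lemma rotn_blk: "rotn d 1 (blk d p s) = blk d p (Suc s)"
proof (rule ext)
  fix i show "rotn d 1 (blk d p s) i = blk d p (Suc s) i"
  proof (cases "i < d")
    case True
    then show ?thesis using idx_lt[OF True, of 1] cnt_shift[OF True, of s p]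
      unfolding rotn_def blk_def by simp
  qed (simp add: rotn_def blk_def)
qed

lemma ff_blk: assumes "0 < p mod d" "d > 0" shows "ff d (blk d p s) = blk d p (Suc s)"
  unfolding ff_def rotn_blk using blk_Pcirc[OF assms] Pcirc_fnp nrm_id by blast

lemma Gcd_one_int2: "(1::int) \<in> A \<Longrightarrow> Gcd A = 1"
proof -
  assume "1 \<in> A"
  then have "Gcd A dvd 1" by (rule Gcd_dvd)
  then show ?thesis using Gcd_int_greater_eq_0[of A] by (simp add: zdvd1_eq)
qed

lemma exists_p: assumes d: "d \<ge> 2" shows "\<exists>p>0. int k < kappap d p"
proof -
  define e where "e = (\<lambda>j::nat. (\<lambda>i::nat. if i = 0 then (1::int) else if i = 1 then int j else 0))"
  have eB: "e j \<in> ballP d (k+1)" if j: "j \<le> k" for j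
  proof -
    have zp: "e j \<in> zpoints d" unfolding zpoints_def e_def using d by auto
    have pr: "primitive d (e j)" unfolding primitive_def
      by (rule Gcd_one_int2) (rule image_eqI[of _ _ 0], use d in \<open>auto simp: e_def\<close>)
    have fn: "\<exists>i<d. e j i > 0 \<and> (\<forall>l<i. e j l = 0)" using d by (intro exI[of _ 0]) (auto simp: e_def)
    have "l1norm d (e j) = (\<Sum>i<d. (if i = 0 then 1 else 0) + (if i = 1 then int j else 0))"
      unfolding l1norm_def e_def by (intro sum.cong refl) auto
    also have "\<dots> = 1 + int j" using d by (simp add: sum.distrib)
    finally have "l1norm d (e j) \<le> int (k+1)" using j by simp
    then show ?thesis using zp pr fn unfolding ballP_def Pcirc_def by blast
  qed
  let ?E = "e ` {..k}"
  have inj: "inj_on e {..k}"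
  proof (rule inj_onI)
    fix j j' assume "e j = e j'"
    then have "e j 1 = e j' 1" by simp
    then show "j = j'" by (simp add: e_def)
  qed
  have "int (k+1) = (\<Sum>x\<in>?E. \<bar>x 0\<bar>)"
    using inj by (simp add: sum.reindex e_def)
  also have "\<dots> \<le> load (ballP d (k+1)) 0"
    unfolding load_def using eB finite_ballP by (intro sum_mono2) auto
  also have "\<dots> \<le> kappap d (k+1)" unfolding kappap_def using d by (intro load_le_kappa) auto
  finally show ?thesis by (intro exI[of _ "k+1"]) simp
qed


theorem lemma4p1:
  fixes d k :: nat
  assumes "d > 0" and "k > 0"
    and "\<not> d dvd pmin d k"
  shows "\<exists>X. X \<subseteq> Pcirc d \<and> finite X \<and> kappa d X \<le> int k
             \<and> int (card X) = \<lfloor>lam d k\<rfloor>"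
proof -
  have d: "d > 0" by fact
  have d2: "d \<ge> 2"
  proof (rule ccontr)
    assume "\<not> d \<ge> 2" then have "d = 1" using d by simp
    then show False using assms(3) by simp
  qed
  define p where "p = pmin d k"
  have pP: "p > 0 \<and> int k < kappap d p"
    unfolding p_def pmin_def by (rule LeastI_ex) (rule exists_p[OF d2])
  then have p: "p > 0" and kp: "int k < kappap d p" by auto
  have pmin_le: "\<not> (q > 0 \<and> int k < kappap d q)" if "q < p" for q
    using that unfolding p_def pmin_def by (rule not_less_Least)
  have b: "0 < p mod d" using assms(3) unfolding p_def[symmetric] by (simp add: dvd_eq_mod_eq_0)
  define K where "K = kappap d (p-1)"
  have K: "K \<le> int k"
  proof (cases "p - 1 = 0")
    case True then show ?thesis unfolding K_def using kappa0[OF d] by simp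
  next
    case False then show ?thesis unfolding K_def using pmin_le[of "p-1"] p by auto
  qed
  define r where "r = int k - K"
  have r0: "r \<ge> 0" unfolding r_def using K by simp
  define B where "B = ballP d (p-1)"
  define T where "T = TT d p"
  have finB: "finite B" unfolding B_def by (rule finite_ballP)
  have finT: "finite T" unfolding T_def by (rule finite_TT)
  have BT: "B \<inter> T = {}" unfolding B_def T_def by (rule ballP_split(2)[OF p])
  have Tinv: "ff d ` T \<subseteq> T" unfolding T_def using ff_TT[OF _ p] by blast
  have injT: "inj_on (ff d) T" unfolding T_def by (rule ff_inj[OF p d])
  have BK: "load B i \<le> K" if "i < d" for i
    unfolding B_def K_def kappap_def by (rule load_le_kappa) (use that in auto)
  obtain i0 where i0: "i0 < d" "kappap d p = load (ballP d p) i0"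
    unfolding kappap_def using kappa_ex[OF d] by blast
  have "load (ballP d p) i0 = load B i0 + load T i0"
    unfolding load_def B_def T_def ballP_split(1)[OF p]
    by (rule sum.union_disjoint) (use finite_ballP finite_TT ballP_split(2)[OF p] in auto)
  then have rT: "r < load T i0" using kp i0 BK[OF i0(1)] unfolding r_def by simp
  have dT: "int d * load T i0 = int p * int (card T)"
    using uniform_load[OF d p _ Tinv, unfolded T_def, OF order.refl i0(1)] unfolding T_def .
  have drT: "int d * r < int p * int (card T)"
    using rT dT d by (metis mult_strict_left_mono of_nat_0_less_iff)
  define S where "S = blk d p ` {..<d}"
  have ST: "S \<subseteq> T" unfolding S_def T_def TT_def using blk_Pcirc[OF b d] by auto
  have injblk: "inj_on (blk d p) {..<d}" by (rule inj_onI) (use blk_inj[OF b] in auto)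
  have cS: "card S = d" unfolding S_def using card_image[OF injblk] by simp
  have Sinv: "ff d ` S \<subseteq> S"
  proof
    fix y assume "y \<in> ff d ` S"
    then obtain c where c: "c < d" "y = ff d (blk d p c)" unfolding S_def by auto
    then have "y = blk d p (Suc c mod d)" using ff_blk[OF b d] blk_mod by simp
    then show "y \<in> S" unfolding S_def using d by auto
  qed
  have finS: "finite S" unfolding S_def by simp
  have SS: "ff d ` S = S"
    by (rule endo_inj_surj[OF finS Sinv]) (rule inj_on_subset[OF injT ST])
  define V where "V = T - S"
  have Vinv: "ff d ` V \<subseteq> V"
  proof
    fix z assume "z \<in> ff d ` V"
    then obtain y where y: "y \<in> T" "y \<notin> S" "z = ff d y" unfolding V_def by blast
    have "z \<in> T" using y Tinv by blast
    moreover have "z \<notin> S"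
    proof
      assume "z \<in> S"
      then obtain w where w: "w \<in> S" "z = ff d w" using SS by (metis imageE)
      have "y = w" by (rule inj_onD[OF injT]) (use y w ST in auto)
      then show False using y w by simp
    qed
    ultimately show "z \<in> V" unfolding V_def by simp
  qed
  have finV: "finite V" unfolding V_def using finT by simp
  have VT: "V \<subseteq> TT d p" unfolding V_def T_def by blast
  obtain G where GG: "G \<subseteq> V \<and> ff d ` G \<subseteq> G \<and> int p * int (card G) \<le> int d * r \<and>
      (G = V \<or> int d * r < int p * int (card G) + int d * int p)"
    using greedy[OF d p r0 finV VT Vinv] by (elim exE)
  note G = GG[THEN conjunct1] GG[THEN conjunct2, THEN conjunct1]
      GG[THEN conjunct2, THEN conjunct2, THEN conjunct1] GG[THEN conjunct2, THEN conjunct2, THEN conjunct2]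
  have cT: "card T = card V + d"
  proof -
    have "card V = card T - card S" unfolding V_def by (rule card_Diff_subset[OF finS ST])
    moreover have "card S \<le> card T" by (rule card_mono[OF finT ST])
    ultimately show ?thesis using cS by simp
  qed
  have Gb: "int d * r < int p * int (card G) + int d * int p"
  proof (cases "G = V")
    case True
    have "int p * int (card T) = int p * int (card G) + int d * int p"
      using cT True by (simp add: algebra_simps)
    then show ?thesis using drT by simp
  next
    case False then show ?thesis using G(4) by simp
  qed
  define D where "D = int d * r - int p * int (card G)"
  have D0: "D \<ge> 0" and Dlt: "D < int d * int p" unfolding D_def using G(3) Gb by simp_all
  define t where "t = nat (D div int p)"
  have tD: "int t * int p \<le> D"
  proof -
    have e1: "D div int p * int p + D mod int p = D" by (rule div_mult_mod_eq)
    have "D mod int p \<ge> 0" using p by simp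
    then have "D div int p * int p \<le> D" using e1 by linarith
    moreover have "D div int p \<ge> 0" using D0 p by (simp add: pos_imp_zdiv_nonneg_iff)
    ultimately show ?thesis unfolding t_def by simp
  qed
  have td: "t < d"
  proof -
    have "int t * int p < int d * int p" using tD Dlt by simp
    then have "int t < int d" using p by (simp add: mult_less_cancel_right)
    then show ?thesis by simp
  qed
  define Y where "Y = (\<lambda>n. blk d p (sq d p n)) ` {..<t}"
  have YS: "Y \<subseteq> S"
  proof
    fix y assume "y \<in> Y"
    then obtain n where "y = blk d p (sq d p n)" unfolding Y_def by blast
    then have y: "y = blk d p (sq d p n mod d)" by (simp only: blk_mod)
    have "sq d p n mod d \<in> {..<d}" using d by simp
    then show "y \<in> S" unfolding S_def y by (rule imageI)
  qed
  have injY: "inj_on (\<lambda>n. blk d p (sq d p n)) {..<t}"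
  proof (rule inj_onI)
    fix n m assume nm: "n \<in> {..<t}" "m \<in> {..<t}" "blk d p (sq d p n) = blk d p (sq d p m)"
    then have e: "blk d p (sq d p n mod d) = blk d p (sq d p m mod d)" by (simp only: blk_mod)
    have "sq d p n mod d < d" "sq d p m mod d < d" using d by simp_all
    then have e2: "sq d p n mod d = sq d p m mod d" using blk_inj[OF b _ _ e] by blast
    have "n < d" "m < d" using nm(1,2) td by auto
    then show "n = m" using prefix_inj[OF d _ _ e2] by blast
  qed
  have cY: "card Y = t" unfolding Y_def using card_image[OF injY] by simp
  have loadY: "int d * load Y i \<le> int t * int p + int d - 1" if i: "i < d" for i
  proof -
    have "load Y i = (\<Sum>n<t. \<bar>blk d p (sq d p n) i\<bar>)"
      unfolding load_def Y_def by (rule sum.reindex[OF injY, unfolded comp_def])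
    also have "\<dots> = int (\<Sum>n<t. cnt d (sq d p n) p i)" using i by (simp add: blk_def)
    finally have ly: "load Y i = int (\<Sum>n<t. cnt d (sq d p n) p i)" .
    have "(\<Sum>n<t. cnt d (sq d p n) p i) * d \<le> t*p + d - 1" by (rule prefix_load[OF d i])
    then have "int ((\<Sum>n<t. cnt d (sq d p n) p i) * d) \<le> int (t*p + d - 1)" by linarith
    then show ?thesis unfolding ly using d by (simp add: algebra_simps of_nat_diff)
  qed
  define X where "X = B \<union> G \<union> Y"
  have GT: "G \<subseteq> T" "G \<inter> S = {}" using G(1) unfolding V_def by auto
  have YT: "Y \<subseteq> T" using YS ST by blast
  have finG: "finite G" using GT finT finite_subset by blast
  have finY: "finite Y" unfolding Y_def by simp
  have disj1: "B \<inter> (G \<union> Y) = {}" using BT GT YT by blast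
  have disj2: "G \<inter> Y = {}" using GT YS by blast
  have XP: "X \<subseteq> Pcirc d" unfolding X_def using GT YT
    unfolding B_def T_def ballP_def TT_def by blast
  have finX: "finite X" unfolding X_def using finB finG finY by simp
  have cX: "card X = card B + card G + t"
  proof -
    have "card X = card B + card (G \<union> Y)" unfolding X_def Un_assoc
      by (rule card_Un_disjoint[OF finB _ disj1]) (use finG finY in simp)
    also have "card (G \<union> Y) = card G + card Y" by (rule card_Un_disjoint[OF finG finY disj2])
    finally show ?thesis using cY by simp
  qed
  have Gu: "int d * load G i = int p * int (card G)" if "i < d" for i
    using uniform_load[OF d p _ G(2) that] GT(1) unfolding T_def by blast
  have kX: "kappa d X \<le> int k"
  proof (rule kappa_le[OF d])
    fix i assume i: "i < d"
    have "load X i = load B i + (load G i + load Y i)"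
    proof -
      have "load X i = load B i + load (G \<union> Y) i" unfolding X_def Un_assoc load_def
        by (rule sum.union_disjoint[OF finB _ disj1]) (use finG finY in simp)
      also have "load (G \<union> Y) i = load G i + load Y i" unfolding load_def
        by (rule sum.union_disjoint[OF finG finY disj2])
      finally show ?thesis .
    qed
    moreover have "load G i + load Y i \<le> r"
    proof -
      have "int d * (load G i + load Y i) \<le> int p * int (card G) + int t * int p + int d - 1"
        using Gu[OF i] loadY[OF i] by (simp add: algebra_simps)
      also have "\<dots> \<le> int d * r + int d - 1" using tD unfolding D_def by simp
      finally have h: "int d * (load G i + load Y i) < int d * (r + 1)" by (simp add: algebra_simps)
      then show ?thesis using d by (simp add: mult_less_cancel_left)
    qed
    ultimately show "load X i \<le> int k" using BK[OF i] unfolding r_def by simp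
  qed
  have lamf: "\<lfloor>lam d k\<rfloor> = int (card B) + (int d * r) div int p"
  proof -
    have "lam d k = real (card B) + real_of_int (int d * r) / real_of_int (int p)"
      unfolding lam_def Let_def p_def[symmetric] K_def[symmetric] Np_def B_def[symmetric] r_def
      by simp
    then have "\<lfloor>lam d k\<rfloor> = \<lfloor>real_of_int (int d * r) / real_of_int (int p) + of_int (int (card B))\<rfloor>"
      by (simp add: add.commute)
    also have "\<dots> = \<lfloor>real_of_int (int d * r) / real_of_int (int p)\<rfloor> + int (card B)"
      by (rule floor_add_int[symmetric])
    also have "\<lfloor>real_of_int (int d * r) / real_of_int (int p)\<rfloor> = (int d * r) div int p"
      by (rule floor_divide_of_int_eq)
    finally show ?thesis by simp
  qed
  have "(int d * r) div int p = int (card G) + D div int p"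
  proof -
    have "int d * r = D + int (card G) * int p" unfolding D_def by (simp add: algebra_simps)
    then show ?thesis using p by (simp add: div_mult_self1)
  qed
  then have "int (card X) = \<lfloor>lam d k\<rfloor>"
    unfolding lamf cX t_def using D0 p by (simp add: pos_imp_zdiv_nonneg_iff)
  then show ?thesis using XP finX kX by blast
qed

end
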